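(* Let $\widehat{\mathscr{O}}$ be a commutative local principal ideal ring, complete with respect to its unique maximal ideal $\mathfrak{m}=(\pi)$, with residue field $k$ of characteristic other than $2$. Let $A\in\mathrm{M}_n(\widehat{\mathscr{O}})$ be cyclic, and let $F\in\widehat{\mathscr{O}}[x_1,\dots,x_m]$ (commuting variables) be a monic polynomial of degree $d$, with reduction $\overline{F}\in k[x_1,\dots,x_m]$. Suppose there is $\widetilde{\mathbf B}=(\widetilde{B}_1,\dots,\widetilde{B}_m)\in\mathrm{M}_n(k)^m$ with $\widetilde B_i\widetilde B_j=\widetilde B_j\widetilde B_i$ for all $i,j$, such that $\overline{F}(\widetilde{\mathbf B})=\overline{A}$, and suppose that for some $1\le r\le m$ one has $\frac{\partial \overline F}{\partial x_i}\big|_{\widetilde{\mathbf B}}\in\mathrm{GL}_n(k)$ for $i=1,\dots,r$ and $\frac{\partial \overline F}{\partial x_i}\big|_{\widetilde{\mathbf B}}=0\in\mathrm{M}_n(k)$ for $i=r+1,\dots,m$. Then there exists a tuple $\mathbf B=(B_1,\dots,B_m)\in\mathrm{M}_n(\widehat{\mathscr{O}})^m$ of pairwise commuting matrices such that $\overline{B_i}=\widetilde B_i$ for each $i=1,\dots,m$ and $F(\mathbf B)=A$.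
   Context: Bars denote reduction modulo $\mathfrak m$ (entrywise for matrices, coefficientwise for polynomials). $A\in\mathrm{M}_n(\widehat{\mathscr O})$ is called cyclic if $\overline{A}\in\mathrm{M}_n(k)$ is cyclic, i.e. $k^n$ is a cyclic $k[t]$-module via $\overline A$. Completeness means $\widehat{\mathscr O}\to\varprojlim_j\widehat{\mathscr O}/\mathfrak m^j$ is an isomorphism. Evaluation of a polynomial in commuting variables at a tuple of pairwise commuting matrices is by substitution. *)

theory Defs
  imports "HOL-Analysis.Analysis" "HOL-Library.Poly_Mapping"
begin

text \<open>Multivariate polynomials over a commutative ring 'a in the variables x_0, x_1, ...
  (indexed by nat): finitely supported maps from monomials (exponent vectors
  nat finitely supported) to coefficients.\<close>
type_synonym 'a mpoly = "(nat \<Rightarrow>\<^sub>0 nat) \<Rightarrow>\<^sub>0 'a"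

definition mdeg :: "(nat \<Rightarrow>\<^sub>0 nat) \<Rightarrow> nat" where
  "mdeg \<alpha> = (\<Sum>i\<in>Poly_Mapping.keys \<alpha>. Poly_Mapping.lookup \<alpha> i)"

definition deglex_less :: "(nat \<Rightarrow>\<^sub>0 nat) \<Rightarrow> (nat \<Rightarrow>\<^sub>0 nat) \<Rightarrow> bool" where
  "deglex_less \<beta> \<alpha> \<longleftrightarrow> mdeg \<beta> < mdeg \<alpha> \<or>
     (mdeg \<beta> = mdeg \<alpha> \<and> (\<exists>i. Poly_Mapping.lookup \<beta> i < Poly_Mapping.lookup \<alpha> i \<and> (\<forall>j<i. Poly_Mapping.lookup \<beta> j = Poly_Mapping.lookup \<alpha> j)))"

definition monic_deg :: "'a::comm_ring_1 mpoly \<Rightarrow> nat \<Rightarrow> bool" where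
  "monic_deg F d \<longleftrightarrow> (\<exists>\<alpha>\<in>Poly_Mapping.keys F. Poly_Mapping.lookup F \<alpha> = 1 \<and> mdeg \<alpha> = d \<and>
     (\<forall>\<beta>\<in>Poly_Mapping.keys F. \<beta> \<noteq> \<alpha> \<longrightarrow> deglex_less \<beta> \<alpha>))"

definition pderiv_m :: "nat \<Rightarrow> 'a::comm_ring_1 mpoly \<Rightarrow> 'a mpoly" where
  "pderiv_m i p = Abs_poly_mapping
     (\<lambda>\<beta>. of_nat (Suc (Poly_Mapping.lookup \<beta> i)) * Poly_Mapping.lookup p (\<beta> + Poly_Mapping.single i 1))"

definition matpow :: "'a::semiring_1^'n^'n \<Rightarrow> nat \<Rightarrow> 'a^'n^'n" where
  "matpow M k = ((\<lambda>P. M ** P) ^^ k) (mat 1)"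

definition mono_eval :: "(nat \<Rightarrow>\<^sub>0 nat) \<Rightarrow> (nat \<Rightarrow> 'a::comm_ring_1^'n^'n) \<Rightarrow> 'a^'n^'n" where
  "mono_eval \<alpha> B = foldr (\<lambda>i P. matpow (B i) (Poly_Mapping.lookup \<alpha> i) ** P)
      (sorted_list_of_set (Poly_Mapping.keys \<alpha>)) (mat 1)"

definition mpoly_eval :: "'a::comm_ring_1 mpoly \<Rightarrow> (nat \<Rightarrow> 'a^'n^'n) \<Rightarrow> 'a^'n^'n" where
  "mpoly_eval p B = (\<Sum>\<alpha>\<in>Poly_Mapping.keys p. mat (Poly_Mapping.lookup p \<alpha>) ** mono_eval \<alpha> B)"

definition map_matrix :: "('a \<Rightarrow> 'b) \<Rightarrow> 'a^'n^'m \<Rightarrow> 'b^'n^'m" where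
  "map_matrix f M = (\<chi> i j. f (M $ i $ j))"

definition cyclic_mat :: "'k::field^'n^'n \<Rightarrow> bool" where
  "cyclic_mat M \<longleftrightarrow> (\<exists>v. vec.span (range (\<lambda>j. matpow M j *v v)) = UNIV)"

definition is_ideal :: "'a::comm_ring_1 set \<Rightarrow> bool" where
  "is_ideal I \<longleftrightarrow> 0 \<in> I \<and> (\<forall>x\<in>I. \<forall>y\<in>I. x + y \<in> I) \<and> (\<forall>a. \<forall>x\<in>I. a * x \<in> I)"

definition principal_ideal_ring :: "'a::comm_ring_1 itself \<Rightarrow> bool" where
  "principal_ideal_ring _ \<longleftrightarrow> (\<forall>I::'a set. is_ideal I \<longrightarrow> (\<exists>g. I = {g * a |a. True}))"

text \<open>m = (\<pi>), m^j = (\<pi>^j). Completeness: the natural map to the inverse limit of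
  the O/m^j is bijective (injective: separated; surjective: every compatible
  system of residues, given by representatives, comes from an element).\<close>
definition complete_wrt :: "'a::comm_ring_1 \<Rightarrow> bool" where
  "complete_wrt \<pi> \<longleftrightarrow>
     (\<forall>x. (\<forall>j. \<pi> ^ j dvd x) \<longrightarrow> x = 0) \<and>
     (\<forall>y::nat \<Rightarrow> 'a. (\<forall>j. \<pi> ^ j dvd (y (Suc j) - y j)) \<longrightarrow>
        (\<exists>x. \<forall>j. \<pi> ^ j dvd (x - y j)))"

definition residue_map :: "'a::comm_ring_1 \<Rightarrow> ('a \<Rightarrow> 'k::field) \<Rightarrow> bool" where
  "residue_map \<pi> red \<longleftrightarrow> red 0 = 0 \<and> red 1 = 1 \<and> (\<forall>x y. red (x + y) = red x + red y) \<and>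
     (\<forall>x y. red (x * y) = red x * red y) \<and> surj red \<and> (\<forall>x. red x = 0 \<longleftrightarrow> \<pi> dvd x)"

end

theory Submission
  imports Defs
begin

lemma matrix_add_rdistrib': "((A::'a::semiring_1^'n^'m) + B) ** (C::'a^'p^'n) = A ** C + B ** C"
  by (vector matrix_matrix_mult_def sum.distrib[symmetric] field_simps)

lemma matrix_diff_rdistrib: "((A::'a::ring_1^'n^'m) - B) ** (C::'a^'p^'n) = A ** C - B ** C"
  by (vector matrix_matrix_mult_def sum_subtractf[symmetric] field_simps)

lemma matrix_diff_ldistrib: "(C::'a::ring_1^'n^'m) ** ((A::'a^'p^'n) - B) = C ** A - C ** B"
  by (vector matrix_matrix_mult_def sum_subtractf[symmetric] field_simps)

lemma matrix_neg_left: "(- (A::'a::ring_1^'n^'m)) ** (C::'a^'p^'n) = - (A ** C)"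
  by (vector matrix_matrix_mult_def sum_negf[symmetric] field_simps)

lemma matrix_neg_right: "(C::'a::ring_1^'n^'m) ** (- (A::'a^'p^'n)) = - (C ** A)"
  by (vector matrix_matrix_mult_def sum_negf[symmetric] field_simps)

lemma mat_mul_left: "mat (c::'a::comm_semiring_1) ** (M::'a^'n^'n) = (\<chi> i j. c * M$i$j)"
  by (simp add: matrix_matrix_mult_def mat_def vec_eq_iff if_distrib if_distribR sum.delta' cong: if_cong)

lemma mat_mul_right: "(M::'a::comm_semiring_1^'n^'n) ** mat c = (\<chi> i j. c * M$i$j)"
  by (simp add: matrix_matrix_mult_def mat_def vec_eq_iff if_distrib if_distribR sum.delta' mult.commute cong: if_cong)

lemma mat_comm: "mat (c::'a::comm_semiring_1) ** (M::'a^'n^'n) = M ** mat c"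
  by (simp add: mat_mul_left mat_mul_right)

lemma mat_mult: "mat (a::'a::comm_semiring_1) ** (mat b :: 'a^'n^'n) = mat (a*b)"
  unfolding mat_mul_left by (simp add: vec_eq_iff mat_def)

lemma mat_add: "(mat (a::'a::comm_semiring_1) :: 'a^'n^'n) + mat b = mat (a+b)"
  by (simp add: vec_eq_iff mat_def)

lemma matrix_mul_sum_left: "(M::'a::semiring_1^'n^'m) ** sum (f::_\<Rightarrow>'a^'p^'n) S = sum (\<lambda>x. M ** f x) S"
  by (induction S rule: infinite_finite_induct) (auto simp: matrix_add_ldistrib)

lemma matrix_mul_sum_right: "sum (f::_\<Rightarrow>'a::semiring_1^'n^'m) S ** (M::'a^'p^'n) = sum (\<lambda>x. f x ** M) S"
  by (induction S rule: infinite_finite_induct) (auto simp: matrix_add_rdistrib')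

lemma matpow_0[simp]: "matpow M 0 = mat 1" by (simp add: matpow_def)
lemma matpow_Suc: "matpow M (Suc k) = M ** matpow M k" by (simp add: matpow_def)

definition rhom :: "('a::comm_ring_1 \<Rightarrow> 'b::comm_ring_1) \<Rightarrow> bool" where
  "rhom \<phi> \<longleftrightarrow> \<phi> 0 = 0 \<and> \<phi> 1 = 1 \<and> (\<forall>x y. \<phi> (x+y) = \<phi> x + \<phi> y) \<and> (\<forall>x y. \<phi> (x*y) = \<phi> x * \<phi> y)"

context fixes \<phi> :: "'a::comm_ring_1 \<Rightarrow> 'b::comm_ring_1" assumes h: "rhom \<phi>"
begin

lemma rh0[simp]: "\<phi> 0 = 0" and rh1[simp]: "\<phi> 1 = 1" and rhadd[simp]: "\<phi> (x+y) = \<phi> x + \<phi> y"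
  and rhmul[simp]: "\<phi> (x*y) = \<phi> x * \<phi> y"
  using h by (auto simp: rhom_def)

lemma rhneg[simp]: "\<phi> (- x) = - \<phi> x"
proof -
  have "\<phi> (- x) + \<phi> x = 0" by (metis rhadd rh0 add.left_inverse)
  thus ?thesis by (simp add: eq_neg_iff_add_eq_0)
qed

lemma rhdiff[simp]: "\<phi> (x - y) = \<phi> x - \<phi> y"
  by (metis rhadd rhneg diff_conv_add_uminus)

lemma rhsum[simp]: "\<phi> (sum f S) = sum (\<lambda>x. \<phi> (f x)) S"
  by (induction S rule: infinite_finite_induct) auto

lemma rhnat[simp]: "\<phi> (of_nat k) = of_nat k"
  by (induction k) auto

lemma rhpow[simp]: "\<phi> (x ^ k) = \<phi> x ^ k"
  by (induction k) auto

lemma mm_mult: "map_matrix \<phi> ((M::'a^'n^'m) ** (N::'a^'p^'n)) = map_matrix \<phi> M ** map_matrix \<phi> N"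
  by (simp add: map_matrix_def matrix_matrix_mult_def)

lemma mm_add: "map_matrix \<phi> ((M::'a^'n^'m) + N) = map_matrix \<phi> M + map_matrix \<phi> N"
  by (simp add: map_matrix_def vec_eq_iff)

lemma mm_diff: "map_matrix \<phi> ((M::'a^'n^'m) - N) = map_matrix \<phi> M - map_matrix \<phi> N"
  by (simp add: map_matrix_def vec_eq_iff)

lemma mm_neg: "map_matrix \<phi> (- (M::'a^'n^'m)) = - map_matrix \<phi> M"
  by (simp add: map_matrix_def vec_eq_iff)

lemma mm_zero: "map_matrix \<phi> (0::'a^'n^'m) = 0"
  by (simp add: map_matrix_def vec_eq_iff)

lemma mm_mat: "map_matrix \<phi> (mat c :: 'a^'n^'n) = mat (\<phi> c)"
  by (simp add: map_matrix_def vec_eq_iff mat_def)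

lemma mm_sum: "map_matrix \<phi> (sum (f::_\<Rightarrow>'a^'n^'m) S) = sum (\<lambda>x. map_matrix \<phi> (f x)) S"
  by (induction S rule: infinite_finite_induct) (auto simp: mm_zero mm_add)

lemma mm_matpow: "map_matrix \<phi> (matpow (M::'a^'n^'n) k) = matpow (map_matrix \<phi> M) k"
  by (induction k) (auto simp: mm_mat matpow_Suc mm_mult)

lemma mm_foldr: "map_matrix \<phi> (foldr (\<lambda>i P. matpow ((B::nat\<Rightarrow>'a^'n^'n) i) (g i) ** P) xs Q)
   = foldr (\<lambda>i P. matpow (map_matrix \<phi> (B i)) (g i) ** P) xs (map_matrix \<phi> Q)"
  by (induction xs) (auto simp: mm_mult mm_matpow)

lemma mm_mono_eval: "map_matrix \<phi> (mono_eval \<alpha> (B::nat\<Rightarrow>'a^'n^'n)) = mono_eval \<alpha> (\<lambda>i. map_matrix \<phi> (B i))"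
  unfolding mono_eval_def by (simp add: mm_foldr mm_mat)

end

lemma mpoly_eval_superset:
  assumes "finite S" "Poly_Mapping.keys p \<subseteq> S"
  shows "mpoly_eval p B = (\<Sum>\<alpha>\<in>S. mat (Poly_Mapping.lookup p \<alpha>) ** mono_eval \<alpha> B)"
  unfolding mpoly_eval_def
  by (rule sum.mono_neutral_left[OF assms]) (auto simp: in_keys_iff)

lemma lookup_map_hom: "f 0 = 0 \<Longrightarrow> Poly_Mapping.lookup (Poly_Mapping.map f p) k = f (Poly_Mapping.lookup p k)"
  by (simp add: map.rep_eq when_def)

lemma keys_map_sub: "Poly_Mapping.keys (Poly_Mapping.map f p) \<subseteq> Poly_Mapping.keys p"
  by (auto simp: in_keys_iff map.rep_eq when_def)

lemma mm_mpoly_eval: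
  assumes h: "rhom \<phi>"
  shows "map_matrix \<phi> (mpoly_eval p (B::nat\<Rightarrow>'a::comm_ring_1^'n^'n)) = mpoly_eval (Poly_Mapping.map \<phi> p) (\<lambda>i. map_matrix \<phi> (B i))"
proof -
  have "mpoly_eval (Poly_Mapping.map \<phi> p) (\<lambda>i. map_matrix \<phi> (B i)) =
     (\<Sum>\<alpha>\<in>Poly_Mapping.keys p. mat (Poly_Mapping.lookup (Poly_Mapping.map \<phi> p) \<alpha>) ** mono_eval \<alpha> (\<lambda>i. map_matrix \<phi> (B i)))"
    by (rule mpoly_eval_superset) (auto simp: keys_map_sub)
  also have "\<dots> = map_matrix \<phi> (mpoly_eval p B)"
    unfolding mpoly_eval_def using h
    by (simp add: mm_sum mm_mult mm_mat mm_mono_eval lookup_map_hom)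
  finally show ?thesis by simp
qed

lemma commute_matpow: assumes "(N::'a::semiring_1^'n^'n) ** M = M ** N" shows "N ** matpow M k = matpow M k ** N"
proof (induction k)
  case (Suc k)
  have "N ** matpow M (Suc k) = (N ** M) ** matpow M k" by (simp add: matpow_Suc matrix_mul_assoc)
  also have "\<dots> = M ** (N ** matpow M k)" by (simp add: assms matrix_mul_assoc)
  also have "\<dots> = M ** (matpow M k ** N)" by (simp add: Suc)
  also have "\<dots> = matpow M (Suc k) ** N" by (simp add: matpow_Suc matrix_mul_assoc)
  finally show ?case .
qed simp

lemma commute_foldr: "(\<forall>i\<in>set xs. (N::'a::semiring_1^'n^'n) ** B i = B i ** N) \<Longrightarrow> N ** Q = Q ** N \<Longrightarrow>
   N ** foldr (\<lambda>i P. matpow (B i) (g i) ** P) xs Q = foldr (\<lambda>i P. matpow (B i) (g i) ** P) xs Q ** N"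
proof (induction xs)
  case (Cons a xs)
  let ?P = "foldr (\<lambda>i P. matpow (B i) (g i) ** P) xs Q"
  have 1: "N ** matpow (B a) (g a) = matpow (B a) (g a) ** N" using Cons.prems by (intro commute_matpow) auto
  have 2: "N ** ?P = ?P ** N" using Cons by auto
  have "N ** (matpow (B a) (g a) ** ?P) = (N ** matpow (B a) (g a)) ** ?P" by (simp add: matrix_mul_assoc)
  also have "\<dots> = matpow (B a) (g a) ** (N ** ?P)" by (simp add: 1 matrix_mul_assoc)
  also have "\<dots> = (matpow (B a) (g a) ** ?P) ** N" by (simp add: 2 matrix_mul_assoc)
  finally show ?case by simp
qed simp

lemma commute_mono_eval: "(\<forall>i\<in>Poly_Mapping.keys \<alpha>. (N::'a::comm_ring_1^'n^'n) ** B i = B i ** N) \<Longrightarrow>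
   N ** mono_eval \<alpha> B = mono_eval \<alpha> B ** N"
  unfolding mono_eval_def by (rule commute_foldr) auto

lemma commute_sum: "(\<forall>x\<in>S. (N::'a::semiring_1^'n^'n) ** f x = f x ** N) \<Longrightarrow> N ** sum f S = sum f S ** N"
  by (simp add: matrix_mul_sum_left matrix_mul_sum_right)

lemma commute_mat_mul: "(N::'a::comm_ring_1^'n^'n) ** M = M ** N \<Longrightarrow> N ** (mat c ** M) = (mat c ** M) ** N"
  by (metis mat_comm matrix_mul_assoc)

lemma commute_mpoly_eval: "(\<forall>\<alpha>\<in>Poly_Mapping.keys p. \<forall>i\<in>Poly_Mapping.keys \<alpha>. (N::'a::comm_ring_1^'n^'n) ** B i = B i ** N) \<Longrightarrow>
   N ** mpoly_eval p B = mpoly_eval p B ** N"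
  unfolding mpoly_eval_def
  by (intro commute_sum ballI commute_mat_mul commute_mono_eval) auto

definition bic :: "'a::comm_ring_1^'n^'n \<Rightarrow> ('a^'n^'n) set" where
  "bic A = {M. \<forall>N. N ** A = A ** N \<longrightarrow> N ** M = M ** N}"

lemma bic_A: "A \<in> bic A" by (simp add: bic_def)
lemma bic_mat: "mat c \<in> bic A" by (simp add: bic_def mat_comm)
lemma bic_zero: "0 \<in> bic A" using bic_mat[of 0] by simp
lemma bic_add: "M \<in> bic A \<Longrightarrow> M' \<in> bic A \<Longrightarrow> M + M' \<in> bic A"
  by (simp add: bic_def matrix_add_ldistrib matrix_add_rdistrib')
lemma bic_diff: "M \<in> bic A \<Longrightarrow> M' \<in> bic A \<Longrightarrow> M - M' \<in> bic A"
  by (simp add: bic_def matrix_diff_ldistrib matrix_diff_rdistrib)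
lemma bic_neg: "M \<in> bic A \<Longrightarrow> - M \<in> bic A"
  by (simp add: bic_def matrix_neg_left matrix_neg_right)
lemma bic_mult: "M \<in> bic A \<Longrightarrow> M' \<in> bic A \<Longrightarrow> M ** M' \<in> bic A"
  unfolding bic_def
proof (intro CollectI allI impI)
  fix N assume M: "M \<in> {M. \<forall>N. N ** A = A ** N \<longrightarrow> N ** M = M ** N}"
    and M': "M' \<in> {M. \<forall>N. N ** A = A ** N \<longrightarrow> N ** M = M ** N}" and N: "N ** A = A ** N"
  have 1: "N ** M = M ** N" and 2: "N ** M' = M' ** N" using M M' N by auto
  have "N ** (M ** M') = (M ** N) ** M'" by (simp add: 1 matrix_mul_assoc)
  also have "\<dots> = M ** (M' ** N)" by (simp add: 2 flip: matrix_mul_assoc)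
  finally show "N ** (M ** M') = M ** M' ** N" by (simp add: matrix_mul_assoc)
qed
lemma bic_sum: "(\<And>x. x \<in> S \<Longrightarrow> f x \<in> bic A) \<Longrightarrow> sum f S \<in> bic A"
  by (induction S rule: infinite_finite_induct) (auto intro: bic_zero bic_add)
lemma bic_matpow: "M \<in> bic A \<Longrightarrow> matpow M k \<in> bic A"
  by (induction k) (auto simp: matpow_Suc bic_mat intro: bic_mult)
lemma bic_comm: "M \<in> bic A \<Longrightarrow> M' \<in> bic A \<Longrightarrow> M ** M' = M' ** M"
proof -
  assume a: "M \<in> bic A" "M' \<in> bic A"
  have "A ** M = M ** A" using a(1) unfolding bic_def by blast
  then have "M ** A = A ** M" by simp
  then show ?thesis using a(2) unfolding bic_def by blast
qed
lemma bic_commA: "M \<in> bic A \<Longrightarrow> M ** A = A ** M"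
  using bic_comm[OF _ bic_A] by blast
lemma bic_foldr: "(\<And>i. B i \<in> bic A) \<Longrightarrow> Q \<in> bic A \<Longrightarrow> foldr (\<lambda>i P. matpow (B i) (g i) ** P) xs Q \<in> bic A"
  by (induction xs) (auto intro: bic_mult bic_matpow)
lemma bic_mono_eval: "(\<And>i. B i \<in> bic A) \<Longrightarrow> mono_eval \<alpha> B \<in> bic A"
  unfolding mono_eval_def by (rule bic_foldr) (auto intro: bic_mat)
lemma bic_mpoly_eval: "(\<And>i. B i \<in> bic A) \<Longrightarrow> mpoly_eval p B \<in> bic A"
  unfolding mpoly_eval_def by (intro bic_sum bic_mult bic_mat bic_mono_eval)

definition Rm :: "(nat \<Rightarrow>\<^sub>0 nat) \<Rightarrow> (nat \<Rightarrow> 'a::comm_ring_1^'n^'n) \<Rightarrow> 'a^'n^'n" where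
  "Rm \<alpha> B = foldr (\<lambda>i P. matpow (B i) (Poly_Mapping.lookup \<alpha> i) ** P)
      (sorted_list_of_set (Poly_Mapping.keys \<alpha> - {0})) (mat 1)"

lemma mono_split: "mono_eval \<alpha> B = matpow (B 0) (Poly_Mapping.lookup \<alpha> 0) ** Rm \<alpha> B"
proof (cases "0 \<in> Poly_Mapping.keys \<alpha>")
  case True
  have m: "Min (Poly_Mapping.keys \<alpha>) = 0" using True by (intro Min_eqI) auto
  have "sorted_list_of_set (Poly_Mapping.keys \<alpha>) = 0 # sorted_list_of_set (Poly_Mapping.keys \<alpha> - {0})"
  proof -
    have "Poly_Mapping.keys \<alpha> \<noteq> {}" using True by blast
    from sorted_list_of_set_nonempty[OF finite_keys this] show ?thesis unfolding m .
  qed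
  then show ?thesis by (simp add: mono_eval_def Rm_def)
next
  case False
  then have "Poly_Mapping.lookup \<alpha> 0 = 0" "Poly_Mapping.keys \<alpha> - {0} = Poly_Mapping.keys \<alpha>"
    by (auto simp: in_keys_iff)
  then show ?thesis by (simp add: mono_eval_def Rm_def)
qed

lemma Rm_cong: "(\<And>i. i \<noteq> 0 \<Longrightarrow> Poly_Mapping.lookup \<alpha> i = Poly_Mapping.lookup \<alpha>' i) \<Longrightarrow>
   (\<And>i. i \<noteq> 0 \<Longrightarrow> i \<in> Poly_Mapping.keys \<alpha> \<Longrightarrow> B i = B' i) \<Longrightarrow> Rm \<alpha> B = Rm \<alpha>' B'"
proof -
  assume l: "\<And>i. i \<noteq> 0 \<Longrightarrow> Poly_Mapping.lookup \<alpha> i = Poly_Mapping.lookup \<alpha>' i"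
    and b: "\<And>i. i \<noteq> 0 \<Longrightarrow> i \<in> Poly_Mapping.keys \<alpha> \<Longrightarrow> B i = B' i"
  have k: "Poly_Mapping.keys \<alpha> - {0} = Poly_Mapping.keys \<alpha>' - {0}"
    using l by (auto simp: in_keys_iff)
  show ?thesis unfolding Rm_def k[symmetric]
    by (rule foldr_cong) (auto simp: l b)
qed

lemma Rm_upd: "Rm \<alpha> (B(0:=Y)) = Rm \<alpha> B"
  by (rule Rm_cong) auto

lemma bic_Rm: "(\<And>i. B i \<in> bic A) \<Longrightarrow> Rm \<alpha> B \<in> bic A"
  unfolding Rm_def by (rule bic_foldr) (auto intro: bic_mat)

lemma mm_Rm: "rhom \<phi> \<Longrightarrow> map_matrix \<phi> (Rm \<alpha> B) = Rm \<alpha> (\<lambda>i. map_matrix \<phi> (B i))"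
  unfolding Rm_def by (simp add: mm_foldr mm_mat)

lemma eval_split: "mpoly_eval F (B(0:=Y)) =
   (\<Sum>\<alpha>\<in>Poly_Mapping.keys F. mat (Poly_Mapping.lookup F \<alpha>) ** (matpow Y (Poly_Mapping.lookup \<alpha> 0) ** Rm \<alpha> B))"
  unfolding mpoly_eval_def by (simp add: mono_split Rm_upd)

fun psum :: "nat \<Rightarrow> 'a::comm_ring_1^'n^'n \<Rightarrow> 'a^'n^'n \<Rightarrow> 'a^'n^'n" where
  "psum 0 X Y = 0"
| "psum (Suc a) X Y = matpow X a + Y ** psum a X Y"

lemma pow_diff: assumes c: "X ** Y = Y ** X"
  shows "matpow X a - matpow Y a = (X - Y) ** psum a X Y"
proof (induction a)
  case (Suc a)
  have cy: "(X - Y) ** Y = Y ** (X - Y)" by (simp add: matrix_diff_ldistrib matrix_diff_rdistrib c)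
  have "(X - Y) ** psum (Suc a) X Y = (X - Y) ** matpow X a + ((X - Y) ** Y) ** psum a X Y"
    by (simp add: matrix_add_ldistrib matrix_mul_assoc)
  also have "\<dots> = (X - Y) ** matpow X a + Y ** ((X - Y) ** psum a X Y)"
    by (simp add: cy matrix_mul_assoc)
  also have "\<dots> = (X - Y) ** matpow X a + Y ** (matpow X a - matpow Y a)" by (simp add: Suc)
  also have "\<dots> = matpow X (Suc a) - matpow Y (Suc a)"
    by (simp add: matpow_Suc matrix_diff_ldistrib matrix_diff_rdistrib)
  finally show ?case by simp
qed simp

lemma psum_same: "psum a Z Z = mat (of_nat a) ** matpow Z (a - 1)"
proof (induction a)
  case (Suc a)
  show ?case
  proof (cases a)
    case 0 then show ?thesis by simp
  next
    case (Suc b)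
    have "psum (Suc a) Z Z = matpow Z a + Z ** (mat (of_nat a) ** matpow Z b)" using Suc.IH Suc by simp
    also have "\<dots> = matpow Z a + mat (of_nat a) ** matpow Z a"
    proof -
      have "Z ** (mat (of_nat a) ** matpow Z b) = mat (of_nat a) ** (Z ** matpow Z b)"
        by (metis mat_comm matrix_mul_assoc)
      then show ?thesis by (simp add: Suc matpow_Suc)
    qed
    also have "\<dots> = mat (1 + of_nat a) ** matpow Z a"
      by (simp flip: mat_add add: matrix_add_rdistrib')
    finally show ?thesis by (simp add: add.commute)
  qed
qed simp

lemma mm_psum: "rhom \<phi> \<Longrightarrow> map_matrix \<phi> (psum a X Y) = psum a (map_matrix \<phi> X) (map_matrix \<phi> Y)"
  by (induction a) (auto simp: mm_zero mm_add mm_mult mm_matpow)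

lemma bic_psum: "X \<in> bic A \<Longrightarrow> Y \<in> bic A \<Longrightarrow> psum a X Y \<in> bic A"
  by (induction a) (auto intro: bic_zero bic_add bic_mult bic_matpow)

definition Dl :: "'a::comm_ring_1 mpoly \<Rightarrow> (nat \<Rightarrow> 'a^'n^'n) \<Rightarrow> 'a^'n^'n \<Rightarrow> 'a^'n^'n \<Rightarrow> 'a^'n^'n" where
  "Dl F B X Y = (\<Sum>\<alpha>\<in>Poly_Mapping.keys F. mat (Poly_Mapping.lookup F \<alpha>) ** psum (Poly_Mapping.lookup \<alpha> 0) X Y ** Rm \<alpha> B)"

lemma bic_Dl: "(\<And>i. B i \<in> bic A) \<Longrightarrow> X \<in> bic A \<Longrightarrow> Y \<in> bic A \<Longrightarrow> Dl F B X Y \<in> bic A"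
  unfolding Dl_def by (intro bic_sum bic_mult bic_mat bic_psum bic_Rm) auto

lemma G_diff: assumes c: "X ** Y = Y ** X"
  shows "mpoly_eval F (B(0:=X)) - mpoly_eval F (B(0:=Y)) = (X - Y) ** Dl F B X Y"
proof -
  have "mpoly_eval F (B(0:=X)) - mpoly_eval F (B(0:=Y)) =
    (\<Sum>\<alpha>\<in>Poly_Mapping.keys F. mat (Poly_Mapping.lookup F \<alpha>) ** ((matpow X (Poly_Mapping.lookup \<alpha> 0) - matpow Y (Poly_Mapping.lookup \<alpha> 0)) ** Rm \<alpha> B))"
    by (simp add: eval_split sum_subtractf[symmetric] matrix_diff_ldistrib matrix_diff_rdistrib)
  also have "\<dots> = (\<Sum>\<alpha>\<in>Poly_Mapping.keys F. (X - Y) ** (mat (Poly_Mapping.lookup F \<alpha>) ** psum (Poly_Mapping.lookup \<alpha> 0) X Y ** Rm \<alpha> B))"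
    apply (rule sum.cong[OF refl])
    apply (simp only: pow_diff[OF c])
    by (metis mat_comm matrix_mul_assoc)
  also have "\<dots> = (X - Y) ** Dl F B X Y"
    by (simp add: Dl_def matrix_mul_sum_left)
  finally show ?thesis .
qed

lemma mm_Dl: "rhom \<phi> \<Longrightarrow> map_matrix \<phi> (Dl F B X Y) =
  (\<Sum>\<alpha>\<in>Poly_Mapping.keys F. mat (\<phi> (Poly_Mapping.lookup F \<alpha>)) ** psum (Poly_Mapping.lookup \<alpha> 0) (map_matrix \<phi> X) (map_matrix \<phi> Y) ** Rm \<alpha> (\<lambda>i. map_matrix \<phi> (B i)))"
  unfolding Dl_def by (simp add: mm_sum mm_mult mm_mat mm_psum mm_Rm)

lemma pd_eval:
  fixes p :: "'a::comm_ring_1 mpoly" and B :: "nat \<Rightarrow> 'a^'n^'n"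
  assumes S: "finite S" "Poly_Mapping.keys p \<subseteq> S"
  shows "mpoly_eval (pderiv_m 0 p) B = (\<Sum>\<alpha>\<in>S. mat (of_nat (Poly_Mapping.lookup \<alpha> 0) * Poly_Mapping.lookup p \<alpha>) **
     (matpow (B 0) (Poly_Mapping.lookup \<alpha> 0 - 1) ** Rm \<alpha> B))"
proof -
  define s :: "nat \<Rightarrow>\<^sub>0 nat" where "s = Poly_Mapping.single 0 1"
  define f where "f = (\<lambda>\<beta>. of_nat (Suc (Poly_Mapping.lookup \<beta> 0)) * Poly_Mapping.lookup p (\<beta> + s))"
  define trm where "trm = (\<lambda>\<alpha>. mat (of_nat (Poly_Mapping.lookup \<alpha> 0) * Poly_Mapping.lookup p \<alpha>) **
     (matpow (B 0) (Poly_Mapping.lookup \<alpha> 0 - 1) ** Rm \<alpha> B))"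
  have inj: "inj (\<lambda>\<beta>::nat \<Rightarrow>\<^sub>0 nat. \<beta> + s)" by (rule injI) simp
  have fin: "finite {\<beta>. f \<beta> \<noteq> 0}"
  proof (rule finite_subset)
    show "{\<beta>. f \<beta> \<noteq> 0} \<subseteq> (\<lambda>\<beta>. \<beta> + s) -` Poly_Mapping.keys p" by (auto simp: f_def in_keys_iff)
    show "finite ((\<lambda>\<beta>. \<beta> + s) -` Poly_Mapping.keys p)" by (rule finite_vimageI[OF finite_keys inj])
  qed
  have lk: "Poly_Mapping.lookup (pderiv_m 0 p) = f"
    unfolding pderiv_m_def using fin by (simp add: f_def s_def)
  define T where "T = (\<lambda>\<beta>. \<beta> + s) -` S"
  have finT: "finite T" unfolding T_def by (rule finite_vimageI[OF S(1) inj])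
  have kT: "Poly_Mapping.keys (pderiv_m 0 p) \<subseteq> T"
  proof
    fix x assume "x \<in> Poly_Mapping.keys (pderiv_m 0 p)"
    then have "Poly_Mapping.lookup p (x + s) \<noteq> 0" by (auto simp: in_keys_iff lk f_def)
    then have "x + s \<in> S" using S(2) by (auto simp: in_keys_iff)
    then show "x \<in> T" by (simp add: T_def)
  qed
  have "mpoly_eval (pderiv_m 0 p) B = (\<Sum>\<beta>\<in>T. mat (f \<beta>) ** mono_eval \<beta> B)"
    by (subst mpoly_eval_superset[OF finT kT]) (simp add: lk)
  also have "\<dots> = (\<Sum>\<beta>\<in>T. trm (\<beta> + s))"
  proof (rule sum.cong[OF refl])
    fix \<beta> assume "\<beta> \<in> T"
    have l0: "Poly_Mapping.lookup (\<beta> + s) 0 = Suc (Poly_Mapping.lookup \<beta> 0)"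
      by (simp add: s_def lookup_add)
    have r: "Rm (\<beta> + s) B = Rm \<beta> B"
      by (rule Rm_cong) (auto simp: s_def lookup_add lookup_single)
    show "mat (f \<beta>) ** mono_eval \<beta> B = trm (\<beta> + s)"
      unfolding trm_def l0 r by (simp add: f_def mono_split)
  qed
  also have "\<dots> = (\<Sum>\<alpha>\<in>(\<lambda>\<beta>. \<beta> + s) ` T. trm \<alpha>)"
    using sum.reindex[OF inj_on_subset[OF inj subset_UNIV], of trm T] by (simp add: o_def)
  also have "\<dots> = (\<Sum>\<alpha>\<in>S. trm \<alpha>)"
  proof (rule sum.mono_neutral_left[OF S(1)])
    show "(\<lambda>\<beta>. \<beta> + s) ` T \<subseteq> S" by (auto simp: T_def)
    show "\<forall>\<alpha>\<in>S - (\<lambda>\<beta>. \<beta> + s) ` T. trm \<alpha> = 0"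
    proof
      fix \<alpha> assume a: "\<alpha> \<in> S - (\<lambda>\<beta>. \<beta> + s) ` T"
      show "trm \<alpha> = 0"
      proof (cases "Poly_Mapping.lookup \<alpha> 0 = 0")
        case True then show ?thesis by (simp add: trm_def)
      next
        case False
        have e: "\<alpha> = (\<alpha> - s) + s"
          by (rule poly_mapping_eqI) (use False in \<open>auto simp: s_def lookup_add lookup_minus lookup_single when_def\<close>)
        then have "\<alpha> - s \<in> T" using a by (auto simp: T_def)
        then have "\<alpha> \<in> (\<lambda>\<beta>. \<beta> + s) ` T" using e by blast
        with a show ?thesis by blast
      qed
    qed
  qed
  finally show ?thesis unfolding trm_def .
qed

lemma cyc_poly:
  fixes M N :: "'k::field^'n^'n"
  assumes cyc: "cyclic_mat M" and c: "N ** M = M ** N"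
  shows "\<exists>J c. finite J \<and> N = (\<Sum>j\<in>J. mat (c j) ** matpow M j)"
proof -
  obtain v where sp: "vec.span (range (\<lambda>j. matpow M j *v v)) = UNIV"
    using cyc unfolding cyclic_mat_def by blast
  define f where "f = (\<lambda>j. matpow M j *v v)"
  have "N *v v \<in> vec.span (range f)" using sp by (simp add: f_def)
  then obtain T u where T: "finite T" "T \<subseteq> range f" "N *v v = (\<Sum>t\<in>T. u t *s t)"
    unfolding vec.span_explicit by blast
  define J where "J = inv_into UNIV f ` T"
  have e: "\<And>t. t \<in> T \<Longrightarrow> f (inv_into UNIV f t) = t" using T(2) by (meson f_inv_into_f subsetD)
  have fJ: "f ` J = T"
  proof -
    have "f ` J = (\<lambda>t. f (inv_into UNIV f t)) ` T" by (simp add: J_def image_image)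
    also have "\<dots> = T" using e by force
    finally show ?thesis .
  qed
  have injJ: "inj_on f J" unfolding J_def
    by (rule inj_onI) (metis e imageE)
  have finJ: "finite J" using T(1) by (simp add: J_def)
  define c where "c = (\<lambda>j. u (f j))"
  define P where "P = (\<Sum>j\<in>J. mat (c j) ** matpow M j)"
  have smul: "(mat a ** X) *v w = a *s (X *v w)" for a and X :: "'k^'n^'n" and w
    by (simp add: mat_mul_left matrix_vector_mult_def vec_eq_iff sum_distrib_left mult.assoc)
  have sumv: "(\<Sum>j\<in>K. F j) *v w = (\<Sum>j\<in>K. F j *v w)" for K and F :: "nat \<Rightarrow> 'k^'n^'n" and w
    by (induction K rule: infinite_finite_induct) (auto simp: matrix_vector_mult_add_rdistrib)
  have Pv: "N *v v = P *v v"
    unfolding T(3) P_def sumv smul fJ[symmetric] sum.reindex[OF injJ]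
    by (simp add: c_def f_def)
  have PM: "P ** M = M ** P"
  proof -
    have "M ** P = P ** M" unfolding P_def
      by (intro commute_sum ballI commute_mat_mul commute_matpow) simp
    then show ?thesis by simp
  qed
  have agree: "N *v x = P *v x" if "x \<in> range f" for x
  proof -
    from that obtain k where x: "x = matpow M k *v v" unfolding f_def by blast
    have "N *v x = (N ** matpow M k) *v v" by (simp add: x matrix_vector_mul_assoc)
    also have "\<dots> = (matpow M k ** N) *v v" using commute_matpow[of N M k] c by simp
    also have "\<dots> = matpow M k *v (P *v v)" by (simp add: Pv flip: matrix_vector_mul_assoc)
    also have "\<dots> = (P ** matpow M k) *v v" using commute_matpow[of P M k] PM
      by (simp add: matrix_vector_mul_assoc)
    also have "\<dots> = P *v x" by (simp add: x matrix_vector_mul_assoc)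
    finally show ?thesis .
  qed
  have spf: "vec.span (range f) = UNIV" using sp by (simp add: f_def)
  have "N *v x = P *v x" for x
    by (rule vec.linear_eq_on_span[OF matrix_vector_mul_linear_gen matrix_vector_mul_linear_gen, where B="range f"])
       (auto simp: agree spf)
  then have "N = P" by (simp add: matrix_eq)
  then show ?thesis using finJ unfolding P_def by blast
qed

definition mdv :: "'a::comm_ring_1 \<Rightarrow> nat \<Rightarrow> 'a^'n^'m \<Rightarrow> bool" where
  "mdv \<pi> j M \<longleftrightarrow> (\<forall>i l. \<pi> ^ j dvd M$i$l)"

lemma mdv_add: "mdv \<pi> j M \<Longrightarrow> mdv \<pi> j N \<Longrightarrow> mdv \<pi> j (M + N)"
  by (simp add: mdv_def)
lemma mdv_diff: "mdv \<pi> j M \<Longrightarrow> mdv \<pi> j N \<Longrightarrow> mdv \<pi> j (M - N)"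
  by (simp add: mdv_def)
lemma mdv_neg: "mdv \<pi> j M \<Longrightarrow> mdv \<pi> j (- M)"
  by (simp add: mdv_def)
lemma mdv_zero: "mdv \<pi> j 0"
  by (simp add: mdv_def)
lemma mdv_0: "mdv \<pi> 0 M"
  by (simp add: mdv_def)
lemma mdv_mono: "j \<le> l \<Longrightarrow> mdv \<pi> l M \<Longrightarrow> mdv \<pi> j M"
  unfolding mdv_def by (meson dvd_trans le_imp_power_dvd)
lemma mdv_mult_left: "mdv \<pi> j N \<Longrightarrow> mdv \<pi> j ((M::'a::comm_ring_1^'n^'m) ** (N::'a^'p^'n))"
  unfolding mdv_def matrix_matrix_mult_def by (auto intro!: dvd_sum dvd_mult)
lemma mdv_mult_right: "mdv \<pi> j M \<Longrightarrow> mdv \<pi> j ((M::'a::comm_ring_1^'n^'m) ** (N::'a^'p^'n))"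
  unfolding mdv_def matrix_matrix_mult_def by (auto intro!: dvd_sum dvd_mult2)
lemma mdv_mult2: "mdv \<pi> j M \<Longrightarrow> mdv \<pi> l N \<Longrightarrow> mdv \<pi> (j + l) ((M::'a::comm_ring_1^'n^'m) ** (N::'a^'p^'n))"
proof -
  assume a: "mdv \<pi> j M" "mdv \<pi> l N"
  show ?thesis unfolding mdv_def
  proof (intro allI)
    fix i k
    have "\<pi> ^ (j + l) dvd M $ i $ x * N $ x $ k" for x
      unfolding power_add by (rule mult_dvd_mono) (use a in \<open>auto simp: mdv_def\<close>)
    then show "\<pi> ^ (j + l) dvd (M ** N) $ i $ k"
      unfolding matrix_matrix_mult_def by (simp add: dvd_sum)
  qed
qed

lemma residue_rhom: assumes "residue_map \<pi> red" shows "rhom red"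
  using assms unfolding residue_map_def rhom_def by (elim conjE) (intro conjI)

lemma red_zero_iff: "residue_map \<pi> red \<Longrightarrow> map_matrix red M = 0 \<longleftrightarrow> mdv \<pi> 1 M"
  unfolding residue_map_def mdv_def map_matrix_def vec_eq_iff by simp

lemma red_eq_iff: "residue_map \<pi> red \<Longrightarrow> map_matrix red M = map_matrix red N \<longleftrightarrow> mdv \<pi> 1 (M - N)"
proof -
  assume r: "residue_map \<pi> red"
  have "map_matrix red M = map_matrix red N \<longleftrightarrow> map_matrix red (M - N) = 0"
    using mm_diff[OF residue_rhom[OF r]] by (metis eq_iff_diff_eq_0)
  then show ?thesis using red_zero_iff[OF r] by simp
qed

lemma separated: "complete_wrt \<pi> \<Longrightarrow> (\<And>k. mdv \<pi> k M) \<Longrightarrow> M = 0"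
  unfolding complete_wrt_def mdv_def by (simp add: vec_eq_iff)

lemma complete_mat:
  fixes X :: "nat \<Rightarrow> 'a::comm_ring_1^'n^'m"
  assumes c: "complete_wrt \<pi>" and d: "\<And>k. mdv \<pi> k (X (Suc k) - X k)"
  shows "\<exists>L. \<forall>k. mdv \<pi> k (L - X k)"
proof -
  have "\<forall>i l. \<exists>x. \<forall>k. \<pi> ^ k dvd (x - X k $ i $ l)"
  proof (intro allI)
    fix i l
    have "\<forall>k. \<pi> ^ k dvd (X (Suc k) $ i $ l - X k $ i $ l)" using d by (simp add: mdv_def)
    moreover have cc: "\<forall>y::nat \<Rightarrow> 'a. (\<forall>j. \<pi> ^ j dvd (y (Suc j) - y j)) \<longrightarrow>
        (\<exists>x. \<forall>j. \<pi> ^ j dvd (x - y j))" using c unfolding complete_wrt_def by (elim conjE)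
    ultimately show "\<exists>x. \<forall>k. \<pi> ^ k dvd (x - X k $ i $ l)"
      using spec[OF cc, of "\<lambda>k. X k $ i $ l"] by simp
  qed
  then obtain g where g: "\<And>i l k. \<pi> ^ k dvd (g i l - X k $ i $ l)" by metis
  show ?thesis by (rule exI[of _ "\<chi> i l. g i l"]) (simp add: mdv_def g)
qed

lemma lift_comm:
  fixes A :: "'a::comm_ring_1^'n^'n" and red :: "'a \<Rightarrow> 'k::field"
  assumes r: "residue_map \<pi> red" and cyc: "cyclic_mat (map_matrix red A)"
    and c: "N ** map_matrix red A = map_matrix red A ** N"
  shows "\<exists>L\<in>bic A. map_matrix red L = N"
proof -
  have h: "rhom red" by (rule residue_rhom[OF r])
  have s: "surj red" using r by (simp add: residue_map_def)
  obtain J c where J: "finite J" "N = (\<Sum>j\<in>J. mat (c j) ** matpow (map_matrix red A) j)"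
    using cyc_poly[OF cyc c] by blast
  define L where "L = (\<Sum>j\<in>J. mat (inv red (c j)) ** matpow A j)"
  have "L \<in> bic A" unfolding L_def by (intro bic_sum bic_mult bic_mat bic_matpow bic_A)
  moreover have "map_matrix red L = N"
    unfolding L_def J(2) using h s by (simp add: mm_sum mm_mult mm_mat mm_matpow surj_f_inv_f)
  ultimately show ?thesis by blast
qed

lemma mono_eval_cong: "(\<And>i. i \<in> Poly_Mapping.keys \<alpha> \<Longrightarrow> B i = B' i) \<Longrightarrow> mono_eval \<alpha> B = mono_eval \<alpha> B'"
  unfolding mono_eval_def by (rule foldr_cong) auto

lemma mpoly_eval_cong: "(\<And>\<alpha> i. \<alpha> \<in> Poly_Mapping.keys p \<Longrightarrow> i \<in> Poly_Mapping.keys \<alpha> \<Longrightarrow> B i = B' i) \<Longrightarrow>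
   mpoly_eval p B = mpoly_eval p B'"
  unfolding mpoly_eval_def by (rule sum.cong[OF refl]) (metis mono_eval_cong)

theorem theorem2p5:
  fixes \<pi> :: "'a::comm_ring_1"
    and red :: "'a \<Rightarrow> 'k::field"
    and A :: "'a^'n^'n"
    and F :: "'a mpoly"
    and Bt :: "nat \<Rightarrow> 'k^'n^'n"
    and m r d :: nat
  assumes local_max: "\<forall>x. \<not> x dvd 1 \<longleftrightarrow> \<pi> dvd x"
    and pir: "principal_ideal_ring TYPE('a)"
    and complete: "complete_wrt \<pi>"
    and res: "residue_map \<pi> red"
    and char: "(2::'k) \<noteq> 0"
    and cyc: "cyclic_mat (map_matrix red A)"
    and vars: "\<forall>\<alpha>\<in>Poly_Mapping.keys F. Poly_Mapping.keys \<alpha> \<subseteq> {..<m}"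
    and monic: "monic_deg F d"
    and comm: "\<forall>i<m. \<forall>j<m. Bt i ** Bt j = Bt j ** Bt i"
    and root: "mpoly_eval (Poly_Mapping.map red F) Bt = map_matrix red A"
    and r: "1 \<le> r" "r \<le> m"
    and inv: "\<forall>i<r. invertible (mpoly_eval (pderiv_m i (Poly_Mapping.map red F)) Bt)"
    and zero: "\<forall>i. r \<le> i \<and> i < m \<longrightarrow> mpoly_eval (pderiv_m i (Poly_Mapping.map red F)) Bt = 0"
  shows "\<exists>B :: nat \<Rightarrow> 'a^'n^'n. (\<forall>i<m. \<forall>j<m. B i ** B j = B j ** B i) \<and>
           (\<forall>i<m. map_matrix red (B i) = Bt i) \<and> mpoly_eval F B = A"
proof -
  have h: "rhom red" by (rule residue_rhom[OF res])
  have red0: "red 0 = 0" using h by simp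
  have m0: "0 < m" using r by simp
  define Ab where "Ab = map_matrix red A"
  define Fb where "Fb = Poly_Mapping.map red F"
  have kFb: "Poly_Mapping.keys Fb \<subseteq> Poly_Mapping.keys F" unfolding Fb_def by (rule keys_map_sub)
  have lFb: "Poly_Mapping.lookup Fb \<alpha> = red (Poly_Mapping.lookup F \<alpha>)" for \<alpha>
    unfolding Fb_def by (rule lookup_map_hom[of red, OF red0])
  have BtA: "Bt i ** Ab = Ab ** Bt i" if "i < m" for i
  proof -
    have "Bt i ** mpoly_eval Fb Bt = mpoly_eval Fb Bt ** Bt i"
    proof (rule commute_mpoly_eval, intro ballI)
      fix \<alpha> j assume "\<alpha> \<in> Poly_Mapping.keys Fb" "j \<in> Poly_Mapping.keys \<alpha>"
      then have "j < m" using kFb vars by auto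
      then show "Bt i ** Bt j = Bt j ** Bt i" using comm that by auto
    qed
    then show ?thesis using root by (simp add: Ab_def Fb_def)
  qed
  have "\<forall>i. \<exists>L. L \<in> bic A \<and> (i < m \<longrightarrow> map_matrix red L = Bt i)"
  proof
    fix i show "\<exists>L. L \<in> bic A \<and> (i < m \<longrightarrow> map_matrix red L = Bt i)"
    proof (cases "i < m")
      case True
      then show ?thesis using lift_comm[OF res cyc BtA[OF True, unfolded Ab_def]] by blast
    next
      case False
      then show ?thesis using bic_zero by blast
    qed
  qed
  then obtain B0 where B0: "\<And>i. B0 i \<in> bic A" "\<And>i. i < m \<Longrightarrow> map_matrix red (B0 i) = Bt i"
    by metis
  define Bb where "Bb = (\<lambda>i. map_matrix red (B0 i))"
  have BbBt: "Bb i = Bt i" if "\<alpha> \<in> Poly_Mapping.keys F" "i \<in> Poly_Mapping.keys \<alpha>" for \<alpha> i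
    using that vars B0(2) by (auto simp: Bb_def)
  have RmBb: "Rm \<alpha> Bb = Rm \<alpha> Bt" if "\<alpha> \<in> Poly_Mapping.keys F" for \<alpha>
    by (rule Rm_cong) (auto simp: BbBt[OF that])
  define Dt where "Dt = mpoly_eval (pderiv_m 0 Fb) Bt"
  have "invertible Dt" using inv r by (simp add: Dt_def Fb_def)
  then obtain Di where Di: "Dt ** Di = mat 1" "Di ** Dt = mat 1" unfolding invertible_def by blast
  define G where "G = (\<lambda>Y. mpoly_eval F (B0(0:=Y)) - A)"
  have bicupd: "(B0(0:=Y)) i \<in> bic A" if "Y \<in> bic A" for Y i using that B0(1) by simp
  have bicG: "G Y \<in> bic A" if "Y \<in> bic A" for Y
    unfolding G_def by (intro bic_diff bic_A bic_mpoly_eval bicupd that)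
  have redDl: "map_matrix red (Dl F B0 X Y) = Dt"
    if "map_matrix red X = Bt 0" "map_matrix red Y = Bt 0" for X Y
  proof -
    have "map_matrix red (Dl F B0 X Y) = (\<Sum>\<alpha>\<in>Poly_Mapping.keys F. mat (red (Poly_Mapping.lookup F \<alpha>)) **
        psum (Poly_Mapping.lookup \<alpha> 0) (Bt 0) (Bt 0) ** Rm \<alpha> Bb)"
      by (simp add: mm_Dl[OF h] that Bb_def)
    also have "\<dots> = (\<Sum>\<alpha>\<in>Poly_Mapping.keys F. mat (of_nat (Poly_Mapping.lookup \<alpha> 0) * Poly_Mapping.lookup Fb \<alpha>) **
     (matpow (Bt 0) (Poly_Mapping.lookup \<alpha> 0 - 1) ** Rm \<alpha> Bt))"
    proof (rule sum.cong[OF refl])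
      fix \<alpha> assume a: "\<alpha> \<in> Poly_Mapping.keys F"
      show "mat (red (Poly_Mapping.lookup F \<alpha>)) ** psum (Poly_Mapping.lookup \<alpha> 0) (Bt 0) (Bt 0) ** Rm \<alpha> Bb =
        mat (of_nat (Poly_Mapping.lookup \<alpha> 0) * Poly_Mapping.lookup Fb \<alpha>) **
        (matpow (Bt 0) (Poly_Mapping.lookup \<alpha> 0 - 1) ** Rm \<alpha> Bt)"
        unfolding psum_same RmBb[OF a] lFb
        by (simp add: matrix_mul_assoc mat_mult mult.commute)
    qed
    also have "\<dots> = Dt" unfolding Dt_def
      by (rule pd_eval[symmetric]) (auto simp: kFb)
    finally show ?thesis .
  qed
  define X0 where "X0 = B0 0"
  have X0b: "X0 \<in> bic A" "map_matrix red X0 = Bt 0" using B0 m0 by (auto simp: X0_def)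
  have DtA: "Dt ** Ab = Ab ** Dt"
  proof -
    have "Dl F B0 X0 X0 \<in> bic A" by (intro bic_Dl B0(1) X0b(1))
    then have "Dl F B0 X0 X0 ** A = A ** Dl F B0 X0 X0" by (rule bic_commA)
    then have "map_matrix red (Dl F B0 X0 X0 ** A) = map_matrix red (A ** Dl F B0 X0 X0)" by simp
    then show ?thesis by (simp add: mm_mult[OF h] redDl X0b Ab_def)
  qed
  have DiA: "Di ** Ab = Ab ** Di"
  proof -
    have "Di ** Ab = Di ** Ab ** (Dt ** Di)" by (simp add: Di)
    also have "\<dots> = Di ** (Ab ** Dt) ** Di" by (simp add: matrix_mul_assoc)
    also have "\<dots> = Di ** (Dt ** Ab) ** Di" by (simp add: DtA)
    also have "\<dots> = (Di ** Dt) ** Ab ** Di" by (simp add: matrix_mul_assoc)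
    also have "\<dots> = Ab ** Di" by (simp add: Di)
    finally show ?thesis .
  qed
  obtain U where U: "U \<in> bic A" "map_matrix red U = Di"
    using lift_comm[OF res cyc DiA[unfolded Ab_def]] by blast
  define X where "X = rec_nat X0 (\<lambda>k Xk. Xk - U ** G Xk)"
  have X_0: "X 0 = X0" and X_Suc: "X (Suc k) = X k - U ** G (X k)" for k by (simp_all add: X_def)
  have inv_k: "X k \<in> bic A \<and> map_matrix red (X k) = Bt 0 \<and> mdv \<pi> (Suc k) (G (X k))" for k
  proof (induction k)
    case 0
    have "map_matrix red (G X0) = mpoly_eval Fb Bb - Ab"
      unfolding G_def X0_def by (simp add: mm_diff[OF h] mm_mpoly_eval[OF h] Fb_def Bb_def Ab_def)
    also have "mpoly_eval Fb Bb = mpoly_eval Fb Bt"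
      by (rule mpoly_eval_cong) (use kFb in \<open>auto intro: BbBt\<close>)
    finally have "map_matrix red (G X0) = 0" using root by (simp add: Fb_def Ab_def)
    then have "mdv \<pi> 1 (G X0)" using red_zero_iff[OF res, of "G X0"] by simp
    then show ?case using X0b by (simp add: X_0)
  next
    case (Suc k)
    let ?Y = "X k" and ?Z = "X (Suc k)"
    have Yb: "?Y \<in> bic A" and Yr: "map_matrix red ?Y = Bt 0" and Yd: "mdv \<pi> (Suc k) (G ?Y)" using Suc by auto
    have GY: "G ?Y \<in> bic A" by (rule bicG[OF Yb])
    have Zb: "?Z \<in> bic A" unfolding X_Suc by (intro bic_diff bic_mult Yb U(1) GY)
    have ZY: "?Z - ?Y = - (U ** G ?Y)" by (simp add: X_Suc)
    have dZY: "mdv \<pi> (Suc k) (?Z - ?Y)" unfolding ZY by (intro mdv_neg mdv_mult_left Yd)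
    have Zr: "map_matrix red ?Z = Bt 0"
      using red_eq_iff[OF res, of ?Z ?Y] mdv_mono[OF _ dZY, of 1] Yr by simp
    define De where "De = Dl F B0 ?Z ?Y"
    have Deb: "De \<in> bic A" unfolding De_def by (intro bic_Dl B0(1) Zb Yb)
    have redDe: "map_matrix red De = Dt" unfolding De_def by (rule redDl[OF Zr Yr])
    have "G ?Z - G ?Y = (?Z - ?Y) ** De"
      unfolding G_def De_def using G_diff[OF bic_comm[OF Zb Yb], of F B0] by simp
    then have "G ?Z = G ?Y - (U ** G ?Y) ** De" by (simp add: ZY matrix_neg_left algebra_simps)
    also have "(U ** G ?Y) ** De = G ?Y ** (U ** De)"
      using bic_comm[OF U(1) GY] by (simp add: matrix_mul_assoc)
    finally have GZ: "G ?Z = G ?Y ** (mat 1 - U ** De)" by (simp add: matrix_diff_ldistrib)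
    have "map_matrix red (mat 1) = map_matrix red (U ** De)"
      using h by (simp add: mm_mat[OF h] mm_mult[OF h] U(2) redDe Di)
    then have "mdv \<pi> 1 (mat 1 - U ** De)" using red_eq_iff[OF res] by blast
    then have "mdv \<pi> (Suc k + 1) (G ?Z)" unfolding GZ by (rule mdv_mult2[OF Yd])
    then show ?case using Zb Zr by simp
  qed
  have cauchy: "mdv \<pi> k (X (Suc k) - X k)" for k
  proof -
    have "X (Suc k) - X k = - (U ** G (X k))" by (simp add: X_Suc)
    moreover have "mdv \<pi> (Suc k) (- (U ** G (X k)))" using inv_k[of k] by (intro mdv_neg mdv_mult_left) auto
    ultimately show ?thesis using mdv_mono[of k "Suc k"] by auto
  qed
  obtain L where L: "\<And>k. mdv \<pi> k (L - X k)" using complete_mat[OF complete cauchy] by blast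
  have Lb: "L \<in> bic A" unfolding bic_def
  proof (intro CollectI allI impI)
    fix N assume NA: "N ** A = A ** N"
    have "N ** L - L ** N = 0"
    proof (rule separated[OF complete])
      fix k
      have "X k \<in> bic A" using inv_k by blast
      then have c: "N ** X k = X k ** N" using NA unfolding bic_def by blast
      have "N ** L - L ** N = N ** (L - X k) - (L - X k) ** N"
        by (simp add: matrix_diff_ldistrib matrix_diff_rdistrib c)
      then show "mdv \<pi> k (N ** L - L ** N)"
        using L[of k] by (simp add: mdv_diff mdv_mult_left mdv_mult_right)
    qed
    then show "N ** L = L ** N" by simp
  qed
  have Lr: "map_matrix red L = Bt 0"
    using red_eq_iff[OF res, of L "X 1"] L[of 1] inv_k[of 1] by simp
  have GL: "G L = 0"
  proof (rule separated[OF complete])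
    fix k
    have Xb: "X k \<in> bic A" using inv_k by blast
    have "G L - G (X k) = (L - X k) ** Dl F B0 L (X k)"
      unfolding G_def using G_diff[OF bic_comm[OF Lb Xb], of F B0] by simp
    then have "G L = G (X k) + (L - X k) ** Dl F B0 L (X k)" by (simp add: algebra_simps)
    moreover have "mdv \<pi> k (G (X k))" using inv_k[of k] mdv_mono[of k "Suc k"] by auto
    ultimately show "mdv \<pi> k (G L)" using L[of k] by (simp add: mdv_add mdv_mult_right)
  qed
  define B where "B = B0(0:=L)"
  have Bb: "B i \<in> bic A" for i using bicupd[OF Lb] by (simp add: B_def)
  show ?thesis
  proof (intro exI conjI allI impI)
    fix i j show "B i ** B j = B j ** B i" by (rule bic_comm[OF Bb Bb])
  next
    fix i assume "i < m" then show "map_matrix red (B i) = Bt i"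
      using B0(2) Lr by (auto simp: B_def)
  next
    show "mpoly_eval F B = A" using GL by (simp add: G_def B_def)
  qed
qed

end
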